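(* Let $\alpha\in(0,1)$, let $A\subset\mathbb R$ be bounded, and let $f:A\to\mathbb R$ be uniformly continuous with $V_\alpha(f,A)<\infty$. Then $\lambda(\overline{f(A)})=0$.
   Context: $\lambda$ denotes Lebesgue measure on $\mathbb R$. $V_\alpha(f,A)$ is the supremum of $\sum_{i=1}^m|f(b_i)-f(a_i)|^\alpha$ over all finite collections of non-overlapping intervals $[a_i,b_i]$ with $a_i,b_i\in A$. *)

theory Defs
  imports "HOL-Analysis.Analysis"
begin

definition nonoverlapping_in :: "real set \<Rightarrow> (real \<times> real) list \<Rightarrow> bool" where
  "nonoverlapping_in A ps \<longleftrightarrow>
     (\<forall>i<length ps. fst (ps!i) \<in> A \<and> snd (ps!i) \<in> A \<and> fst (ps!i) \<le> snd (ps!i)) \<and>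
     (\<forall>i<length ps. \<forall>j<length ps. i \<noteq> j \<longrightarrow>
        snd (ps!i) \<le> fst (ps!j) \<or> snd (ps!j) \<le> fst (ps!i))"

definition V_alpha :: "real \<Rightarrow> (real \<Rightarrow> real) \<Rightarrow> real set \<Rightarrow> ereal" where
  "V_alpha \<alpha> f A = (SUP ps \<in> {ps. nonoverlapping_in A ps}.
      ereal (\<Sum>i<length ps. \<bar>f (snd (ps!i)) - f (fst (ps!i))\<bar> powr \<alpha>))"

end

theory Submission
  imports Defs
begin

lemma list_nonoverlap:
  fixes K :: "int set" and p :: "int \<Rightarrow> real \<times> real"
  assumes fin: "finite K"
    and P: "\<forall>k\<in>K. fst (p k) \<in> A \<and> snd (p k) \<in> A \<and> fst (p k) \<le> snd (p k)"
    and O: "\<forall>k\<in>K. \<forall>k'\<in>K. k < k' \<longrightarrow> snd (p k) \<le> fst (p k')"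
  shows "nonoverlapping_in A (map p (sorted_list_of_set K))"
    and "(\<Sum>i<length (map p (sorted_list_of_set K)). g (map p (sorted_list_of_set K) ! i))
           = (\<Sum>k\<in>K. g (p k))"
proof -
  define xs where "xs = sorted_list_of_set K"
  have sx: "set xs = K" and dx: "distinct xs" using fin by (auto simp: xs_def)
  have mem: "xs ! i \<in> K" if "i < length xs" for i using that sx nth_mem by blast
  show "nonoverlapping_in A (map p (sorted_list_of_set K))"
    unfolding nonoverlapping_in_def xs_def[symmetric]
  proof (intro conjI allI impI)
    fix i assume "i < length (map p xs)"
    then show "fst (map p xs ! i) \<in> A" "snd (map p xs ! i) \<in> A" "fst (map p xs ! i) \<le> snd (map p xs ! i)"
      using P mem by auto
  next
    fix i j assume ij: "i < length (map p xs)" "j < length (map p xs)" "i \<noteq> j"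
    then have ne: "xs ! i \<noteq> xs ! j" using dx by (simp add: nth_eq_iff_index_eq)
    have "xs ! i \<in> K" "xs ! j \<in> K" using ij mem by auto
    then show "snd (map p xs ! i) \<le> fst (map p xs ! j) \<or> snd (map p xs ! j) \<le> fst (map p xs ! i)"
      using O ne ij by (cases "xs ! i < xs ! j") (auto simp: not_less less_le)
  qed
  have "(\<Sum>i<length (map p xs). g (map p xs ! i)) = sum_list (map g (map p xs))"
    by (simp add: sum_list_sum_nth lessThan_atLeast0)
  also have "\<dots> = (\<Sum>k\<in>K. g (p k))"
    using dx sx by (simp add: sum_list_distinct_conv_sum_set)
  finally show "(\<Sum>i<length (map p (sorted_list_of_set K)). g (map p (sorted_list_of_set K) ! i))
           = (\<Sum>k\<in>K. g (p k))" by (simp add: xs_def)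
qed

lemma powr_split_le:
  fixes t \<delta> \<alpha> :: real
  assumes "0 \<le> t" "t \<le> \<delta>" "\<alpha> \<le> 1"
  shows "t \<le> t powr \<alpha> * \<delta> powr (1 - \<alpha>)"
proof (cases "t = 0")
  case True then show ?thesis by simp
next
  case False
  then have tp: "0 < t" using assms by auto
  have "t = t powr \<alpha> * t powr (1 - \<alpha>)"
    using tp by (simp add: powr_add[symmetric])
  also have "\<dots> \<le> t powr \<alpha> * \<delta> powr (1 - \<alpha>)"
    using assms tp by (intro mult_left_mono powr_mono2) auto
  finally show ?thesis .
qed

theorem lemma2p2:
  fixes \<alpha> :: real and A :: "real set" and f :: "real \<Rightarrow> real"
  assumes "0 < \<alpha>" and "\<alpha> < 1"
    and "bounded A"
    and "uniformly_continuous_on A f"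
    and "V_alpha \<alpha> f A < \<infinity>"
  shows "emeasure lebesgue (closure (f ` A)) = 0"
proof -
  obtain M0 where M0: "V_alpha \<alpha> f A \<le> ereal M0"
    using assms(5) by (cases "V_alpha \<alpha> f A") auto
  define M where "M = max M0 0"
  have M0le: "M \<ge> 0" by (simp add: M_def)
  have Mbound: "(\<Sum>i<length ps. \<bar>f (snd (ps!i)) - f (fst (ps!i))\<bar> powr \<alpha>) \<le> M"
    if "nonoverlapping_in A ps" for ps
  proof -
    have "ereal (\<Sum>i<length ps. \<bar>f (snd (ps!i)) - f (fst (ps!i))\<bar> powr \<alpha>) \<le> V_alpha \<alpha> f A"
      unfolding V_alpha_def using that by (intro SUP_upper) auto
    also have "\<dots> \<le> ereal M" using M0 by (simp add: M_def order_trans)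
    finally show ?thesis by simp
  qed
  obtain R where R: "\<forall>x\<in>A. norm x \<le> R" using assms(3) by (auto simp: bounded_iff)
  have "closed (closure (f ` A))" by simp
  then have eqm: "emeasure lebesgue (closure (f ` A)) = emeasure lborel (closure (f ` A))"
    by (simp add: borel_closed)
  have main: "emeasure lborel (closure (f ` A)) \<le> ennreal e" if e: "e > 0" for e
  proof -
    define \<delta> where "\<delta> = (e / (4 * M + 1)) powr (1 / (1 - \<alpha>))"
    have dpos: "\<delta> > 0" using e M0le by (simp add: \<delta>_def)
    have dpow: "\<delta> powr (1 - \<alpha>) = e / (4 * M + 1)"
      using e M0le assms(2) by (simp add: \<delta>_def powr_powr)
    obtain \<eta> where eta: "\<eta> > 0" and
      uc: "\<forall>x\<in>A. \<forall>x'\<in>A. dist x' x < \<eta> \<longrightarrow> dist (f x') (f x) < \<delta>"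
      using assms(4) dpos unfolding uniformly_continuous_on_def by blast
    define idx where "idx x = \<lfloor>(x + R) / \<eta>\<rfloor>" for x
    define K where "K = idx ` A"
    have idxK: "idx ` A \<subseteq> {0..\<lfloor>2 * R / \<eta>\<rfloor>}"
    proof
      fix k assume "k \<in> idx ` A"
      then obtain x where x: "x \<in> A" "k = idx x" by auto
      have "-R \<le> x" "x \<le> R" using R x by auto
      then have "0 \<le> (x + R) / \<eta>" "(x + R) / \<eta> \<le> 2 * R / \<eta>"
        using eta by (auto simp: divide_right_mono)
      then show "k \<in> {0..\<lfloor>2 * R / \<eta>\<rfloor>}" using x by (auto simp: idx_def floor_mono)
    qed
    have finK: "finite K" unfolding K_def using idxK finite_subset by blast
    have same: "\<bar>f y - f x\<bar> < \<delta>" if "x \<in> A" "y \<in> A" "idx x = idx y" for x y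
    proof -
      have "\<bar>(y + R) / \<eta> - (x + R) / \<eta>\<bar> < 1" using that(3) unfolding idx_def by linarith
      then have "\<bar>y - x\<bar> < \<eta>" using eta by (simp add: diff_divide_distrib[symmetric])
      then show ?thesis using uc that by (auto simp: dist_real_def)
    qed
    have lessI: "x < y" if "idx x < idx y" for x y
    proof -
      have "(x + R) / \<eta> < (y + R) / \<eta>" using that unfolding idx_def
        by (meson floor_mono linorder_not_le)
      then show ?thesis using eta by (simp add: divide_less_cancel)
    qed
    have "\<forall>k\<in>K. \<exists>x. x \<in> A \<and> idx x = k" by (auto simp: K_def)
    then have "\<exists>a. \<forall>k\<in>K. a k \<in> A \<and> idx (a k) = k" by (rule bchoice)
    then obtain a where a: "\<forall>k\<in>K. a k \<in> A \<and> idx (a k) = k" by (elim exE)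
    define S where "S k = {\<bar>f y - f (a k)\<bar> | y. y \<in> A \<and> idx y = k}" for k
    define r where "r k = Sup (S k)" for k
    have Sle: "\<forall>z\<in>S k. z \<le> \<delta>" if k: "k \<in> K" for k
    proof
      fix z assume "z \<in> S k"
      then obtain y where y: "y \<in> A" "idx y = k" "z = \<bar>f y - f (a k)\<bar>" by (auto simp: S_def)
      have "idx (a k) = idx y" "a k \<in> A" using a k y by auto
      then have "\<bar>f y - f (a k)\<bar> < \<delta>" using same[of "a k" y] y by simp
      then show "z \<le> \<delta>" using y by simp
    qed
    have Sne: "S k \<noteq> {}" if k: "k \<in> K" for k
      using a k unfolding S_def by blast
    have rup: "\<bar>f y - f (a k)\<bar> \<le> r k" and rle: "r k \<le> \<delta>"
      if "k \<in> K" "y \<in> A" "idx y = k" for k y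
    proof -
      have bdd: "bdd_above (S k)"
        using Sle[OF that(1)] by (auto intro: bdd_aboveI)
      have "\<bar>f y - f (a k)\<bar> \<in> S k" using that unfolding S_def by blast
      then show "\<bar>f y - f (a k)\<bar> \<le> r k" unfolding r_def using bdd by (rule cSup_upper)
      show "r k \<le> \<delta>" unfolding r_def using Sle[OF that(1)] Sne[OF that(1)]
        by (simp add: cSup_least)
    qed
    have ex: "\<exists>y. y \<in> A \<and> idx y = k \<and> r k \<le> 2 * \<bar>f y - f (a k)\<bar>" if k: "k \<in> K" for k
    proof (cases "r k > 0")
      case True
      have "r k / 2 < Sup (S k)"
        using True by (simp add: r_def)
      then obtain z where z: "z \<in> S k" "r k / 2 < z"
        using less_cSupD[OF Sne[OF k]] by blast
      then obtain y where y: "y \<in> A" "idx y = k" "z = \<bar>f y - f (a k)\<bar>" by (auto simp: S_def)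
      show ?thesis
        by (rule exI[of _ y]) (use y z in simp)
    next
      case False
      then show ?thesis using a k by (intro exI[of _ "a k"]) auto
    qed
    have "\<forall>k\<in>K. \<exists>y. y \<in> A \<and> idx y = k \<and> r k \<le> 2 * \<bar>f y - f (a k)\<bar>"
      using ex by blast
    then have "\<exists>b. \<forall>k\<in>K. b k \<in> A \<and> idx (b k) = k \<and> r k \<le> 2 * \<bar>f (b k) - f (a k)\<bar>"
      by (rule bchoice)
    then obtain b where b: "\<forall>k\<in>K. b k \<in> A \<and> idx (b k) = k \<and> r k \<le> 2 * \<bar>f (b k) - f (a k)\<bar>"
      by (elim exE)
    define p where "p k = (min (a k) (b k), max (a k) (b k))" for k
    have habs: "\<bar>f (snd (p k)) - f (fst (p k))\<bar> = \<bar>f (b k) - f (a k)\<bar>" for k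
      by (auto simp: p_def min_def max_def abs_minus_commute)
    have P: "\<forall>k\<in>K. fst (p k) \<in> A \<and> snd (p k) \<in> A \<and> fst (p k) \<le> snd (p k)"
      using a b by (auto simp: p_def min_def max_def)
    have O: "\<forall>k\<in>K. \<forall>k'\<in>K. k < k' \<longrightarrow> snd (p k) \<le> fst (p k')"
    proof (intro ballI impI)
      fix k k' assume "k \<in> K" "k' \<in> K" "k < k'"
      moreover have "idx (a k) = k" "idx (b k) = k" "idx (a k') = k'" "idx (b k') = k'"
        using a b \<open>k \<in> K\<close> \<open>k' \<in> K\<close> by auto
      ultimately have "a k < a k'" "a k < b k'" "b k < a k'" "b k < b k'"
        using lessI by simp_all
      then show "snd (p k) \<le> fst (p k')" by (simp add: p_def)
    qed
    define ps where "ps = map p (sorted_list_of_set K)"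
    have nov: "nonoverlapping_in A ps" unfolding ps_def using list_nonoverlap(1)[OF finK P O] .
    have sumeq: "(\<Sum>i<length ps. \<bar>f (snd (ps!i)) - f (fst (ps!i))\<bar> powr \<alpha>)
        = (\<Sum>k\<in>K. \<bar>f (b k) - f (a k)\<bar> powr \<alpha>)"
      unfolding ps_def using list_nonoverlap(2)[OF finK P O, of "\<lambda>q. \<bar>f (snd q) - f (fst q)\<bar> powr \<alpha>"]
      by (simp add: habs)
    have sumM: "(\<Sum>k\<in>K. \<bar>f (b k) - f (a k)\<bar> powr \<alpha>) \<le> M"
      using Mbound[OF nov] sumeq by simp
    define U where "U = (\<Union>k\<in>K. {f (a k) - r k .. f (a k) + r k})"
    have "f ` A \<subseteq> U"
    proof
      fix z assume "z \<in> f ` A"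
      then obtain x where x: "x \<in> A" "z = f x" by auto
      have k: "idx x \<in> K" using x by (simp add: K_def)
      have "\<bar>f x - f (a (idx x))\<bar> \<le> r (idx x)" using rup[OF k x(1)] by simp
      then show "z \<in> U" unfolding U_def using k x by (auto simp: abs_le_iff intro!: bexI[of _ "idx x"])
    qed
    moreover have "closed U" unfolding U_def using finK by (intro closed_UN) auto
    ultimately have clU: "closure (f ` A) \<subseteq> U" by (rule closure_minimal)
    have rnn: "0 \<le> r k" if "k \<in> K" for k
      using rup[OF that, of "a k"] a that by auto
    have "emeasure lborel (closure (f ` A)) \<le> emeasure lborel U"
      using clU by (intro emeasure_mono) (auto simp: U_def)
    also have "\<dots> \<le> (\<Sum>k\<in>K. emeasure lborel {f (a k) - r k .. f (a k) + r k})"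
      unfolding U_def using finK by (intro emeasure_subadditive_finite) auto
    also have "\<dots> = (\<Sum>k\<in>K. ennreal (2 * r k))"
      using rnn by (intro sum.cong) auto
    also have "\<dots> = ennreal (\<Sum>k\<in>K. 2 * r k)"
      using rnn by (intro sum_ennreal) auto
    also have "\<dots> \<le> ennreal e"
    proof (intro ennreal_leI)
      have "(\<Sum>k\<in>K. 2 * r k) \<le> (\<Sum>k\<in>K. 4 * (\<bar>f (b k) - f (a k)\<bar> powr \<alpha> * \<delta> powr (1 - \<alpha>)))"
      proof (intro sum_mono)
        fix k assume k: "k \<in> K"
        have t: "\<bar>f (b k) - f (a k)\<bar> \<le> \<delta>"
          using rup[OF k, of "b k"] rle[OF k, of "b k"] b k by auto
        have "2 * r k \<le> 4 * \<bar>f (b k) - f (a k)\<bar>" using b k by auto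
        also have "\<dots> \<le> 4 * (\<bar>f (b k) - f (a k)\<bar> powr \<alpha> * \<delta> powr (1 - \<alpha>))"
          using powr_split_le[OF _ t] assms(2) by simp
        finally show "2 * r k \<le> 4 * (\<bar>f (b k) - f (a k)\<bar> powr \<alpha> * \<delta> powr (1 - \<alpha>))" .
      qed
      also have "\<dots> = 4 * \<delta> powr (1 - \<alpha>) * (\<Sum>k\<in>K. \<bar>f (b k) - f (a k)\<bar> powr \<alpha>)"
        by (simp add: sum_distrib_left mult_ac)
      also have "\<dots> \<le> 4 * \<delta> powr (1 - \<alpha>) * M"
        using sumM by (intro mult_left_mono) auto
      also have "\<dots> = e * (4 * M / (4 * M + 1))"
        using M0le by (simp add: dpow field_simps)
      also have "\<dots> \<le> e"
        using M0le e by (intro mult_left_le) (auto simp: field_simps)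
      finally show "(\<Sum>k\<in>K. 2 * r k) \<le> e" .
    qed
    finally show ?thesis .
  qed
  have "emeasure lborel (closure (f ` A)) \<le> 0"
  proof (rule ennreal_le_epsilon)
    fix e :: real assume "0 < e"
    then show "emeasure lborel (closure (f ` A)) \<le> 0 + ennreal e" using main by simp
  qed
  then show ?thesis using eqm by simp
qed

end
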